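(* Let $\mathcal{B}=\langle V,F,E\rangle$ be a self-contained finite bipartite graph and $M$ an arbitrary perfect matching for $\mathcal{B}$. Then the directed cluster graph $\mathrm{merge}(\mathrm{clust}(\mathcal{G}(\mathcal{B},M)))$ coincides with the output of Algorithm 1 applied to $\mathcal{B}$ with no exogenous vertices.
   Context: $\mathrm{adj}_{\mathcal{B}}(X)$ is the set of neighbours of $X$. $F'\subseteq F$ is self-contained if $|F'|=|\mathrm{adj}_{\mathcal{B}}(F')|$ and $|F''|\le|\mathrm{adj}_{\mathcal{B}}(F'')|$ for all $F''\subseteq F'$; $\mathcal{B}$ is self-contained if $|F|=|V|$ and $F$ is self-contained; minimal self-contained = non-empty self-contained with no non-empty strict self-contained subset. A directed cluster graph is a pair $\langle\mathcal{V},\mathcal{E}\rangle$ with $\mathcal{V}$ a partition of a vertex set and $\mathcal{E}$ a set of edges $x\to C$ from vertices to clusters. $M(X)$ is the set of vertices matched by $M$ to vertices of $X$. (i) $\mathcal{G}(\mathcal{B},M)$: directed graph on $V\cup F$ with, for each $(v-f)\in E$, the edge $f\to v$ if $(v-f)\in M$ and $v\to f$ otherwise. (ii) $\mathrm{clust}(\mathcal{G})=\langle\mathcal{V}',\mathcal{E}'\rangle$: $\mathcal{V}'$ the partition into strongly connected components and $\mathcal{E}'=\{x\to\mathrm{cl}(w):(x\to w)\text{ in }\mathcal{G},\ x\notin\mathrm{cl}(w)\}$, with $\mathrm{cl}(w)$ the component of $w$. (iii) $\mathrm{merge}(\langle\mathcal{V}',\mathcal{E}'\rangle)=\langle\mathcal{V},\mathcal{E}\rangle$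 with $\mathcal{V}=\{S\cup M(S):S\in\mathcal{V}'\}$ and $\mathcal{E}=\{x\to S\cup M(S):(x\to S)\in\mathcal{E}',\ x\notin M(S)\}$. Algorithm 1 (no exogenous vertices): start with $\mathcal{V}=\mathcal{E}=\emptyset$ and $\mathcal{B}'=\langle V',F',E'\rangle=\mathcal{B}$; while $\mathcal{B}'$ is non-null: choose a minimal self-contained set $S_F$ of $\mathcal{B}'$, let $C=S_F\cup\mathrm{adj}_{\mathcal{B}'}(S_F)$, add $C$ to $\mathcal{V}$, add $v\to C$ for every $v\in\mathrm{adj}_{\mathcal{B}}(S_F)\setminus\mathrm{adj}_{\mathcal{B}'}(S_F)$, replace $\mathcal{B}'$ by its subgraph induced by $(V'\cup F')\setminus C$. Output $\langle\mathcal{V},\mathcal{E}\rangle$. *)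

theory Defs
  imports Main
begin

definition bipartite :: "'a set \<Rightarrow> 'a set \<Rightarrow> ('a \<times> 'a) set \<Rightarrow> bool" where
  "bipartite V F E \<longleftrightarrow> V \<inter> F = {} \<and> E \<subseteq> V \<times> F"

definition adj :: "('a \<times> 'a) set \<Rightarrow> 'a set \<Rightarrow> 'a set" where
  "adj E X = {v. \<exists>f\<in>X. (v, f) \<in> E}"

definition self_contained_set :: "'a set \<Rightarrow> ('a \<times> 'a) set \<Rightarrow> 'a set \<Rightarrow> bool" where
  "self_contained_set F E F' \<longleftrightarrow> F' \<subseteq> F \<and> card F' = card (adj E F') \<and>
     (\<forall>F''\<subseteq>F'. card F'' \<le> card (adj E F''))"

definition self_contained_graph :: "'a set \<Rightarrow> 'a set \<Rightarrow> ('a \<times> 'a) set \<Rightarrow> bool" where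
  "self_contained_graph V F E \<longleftrightarrow> card F = card V \<and> self_contained_set F E F"

definition minimal_self_contained :: "'a set \<Rightarrow> ('a \<times> 'a) set \<Rightarrow> 'a set \<Rightarrow> bool" where
  "minimal_self_contained F E S \<longleftrightarrow> S \<noteq> {} \<and> self_contained_set F E S \<and>
     \<not> (\<exists>S'. S' \<noteq> {} \<and> S' \<subset> S \<and> self_contained_set F E S')"

definition perfect_matching :: "'a set \<Rightarrow> 'a set \<Rightarrow> ('a \<times> 'a) set \<Rightarrow> ('a \<times> 'a) set \<Rightarrow> bool" where
  "perfect_matching V F E M \<longleftrightarrow> M \<subseteq> E \<and>
     (\<forall>v\<in>V. \<exists>!f. (v, f) \<in> M) \<and> (\<forall>f\<in>F. \<exists>!v. (v, f) \<in> M)"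

text \<open>The directed graph G(B,M) (edge relation; its vertex set is V \<union> F).\<close>
definition dgraph :: "('a \<times> 'a) set \<Rightarrow> ('a \<times> 'a) set \<Rightarrow> ('a \<times> 'a) set" where
  "dgraph E M = {(f, v). (v, f) \<in> M} \<union> {(v, f). (v, f) \<in> E - M}"

definition scc :: "'a set \<Rightarrow> ('a \<times> 'a) set \<Rightarrow> 'a \<Rightarrow> 'a set" where
  "scc W R w = {u \<in> W. (w, u) \<in> R\<^sup>* \<and> (u, w) \<in> R\<^sup>*}"

text \<open>Directed cluster graphs: a set of clusters and edges from vertices to clusters.\<close>
type_synonym 'a cluster_graph = "'a set set \<times> ('a \<times> 'a set) set"

definition clust :: "'a set \<Rightarrow> ('a \<times> 'a) set \<Rightarrow> 'a cluster_graph" where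
  "clust W R = (scc W R ` W,
     {(x, scc W R w) | x w. x \<in> W \<and> w \<in> W \<and> (x, w) \<in> R \<and> x \<notin> scc W R w})"

definition matched :: "('a \<times> 'a) set \<Rightarrow> 'a set \<Rightarrow> 'a set" where
  "matched M X = {u. \<exists>x\<in>X. (x, u) \<in> M \<or> (u, x) \<in> M}"

definition merge :: "('a \<times> 'a) set \<Rightarrow> 'a cluster_graph \<Rightarrow> 'a cluster_graph" where
  "merge M G = ((\<lambda>S. S \<union> matched M S) ` fst G,
     {(x, S \<union> matched M S) | x S. (x, S) \<in> snd G \<and> x \<notin> matched M S})"

text \<open>E is the edge set of the original
  graph B; the state consists of the current graph B' = (V', F', E') and the clusters
  and edges constructed so far; the last argument is the output.  The choice of the
  minimal self-contained set is nondeterministic.\<close>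
inductive alg1 :: "('a \<times> 'a) set \<Rightarrow> 'a set \<Rightarrow> 'a set \<Rightarrow> ('a \<times> 'a) set \<Rightarrow>
    'a set set \<Rightarrow> ('a \<times> 'a set) set \<Rightarrow> 'a cluster_graph \<Rightarrow> bool" for E where
  stop: "V' \<union> F' = {} \<Longrightarrow> alg1 E V' F' E' Vs Es (Vs, Es)"
| step: "V' \<union> F' \<noteq> {} \<Longrightarrow> minimal_self_contained F' E' S \<Longrightarrow> C = S \<union> adj E' S \<Longrightarrow>
    alg1 E (V' - C) (F' - C) (E' \<inter> ((V' - C) \<times> (F' - C))) (insert C Vs)
      (Es \<union> {(v, C) | v. v \<in> adj E S - adj E' S}) res \<Longrightarrow>
    alg1 E V' F' E' Vs Es res"

end

theory Submission
  imports Defs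
begin

locale L =
  fixes V F :: "'a set" and E M :: "('a \<times> 'a) set"
  assumes finV: "finite V" and finF: "finite F" and disj: "V \<inter> F = {}" and EVF: "E \<subseteq> V \<times> F"
    and ME: "M \<subseteq> E" and Mv: "\<forall>v\<in>V. \<exists>!f. (v, f) \<in> M" and Mf: "\<forall>f\<in>F. \<exists>!v. (v, f) \<in> M"
begin

abbreviation "W \<equiv> V \<union> F"
abbreviation "G \<equiv> dgraph E M"

definition cl :: "'a \<Rightarrow> 'a set" where
  "cl x = scc W G x \<union> matched M (scc W G x)"

lemma MVF: "(v, f) \<in> M \<Longrightarrow> v \<in> V \<and> f \<in> F"
  using ME EVF by auto

lemma Muniq1: "(v, f) \<in> M \<Longrightarrow> (v, f') \<in> M \<Longrightarrow> f = f'"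
  using Mv MVF by blast

lemma Muniq2: "(v, f) \<in> M \<Longrightarrow> (v', f) \<in> M \<Longrightarrow> v = v'"
  using Mf MVF by blast

lemma G_W: "(x, y) \<in> G \<Longrightarrow> x \<in> W \<and> y \<in> W"
  using ME EVF unfolding dgraph_def by auto

lemma G_out_F: "(f, y) \<in> G \<Longrightarrow> f \<in> F \<Longrightarrow> (y, f) \<in> M"
  using EVF disj unfolding dgraph_def by auto

lemma G_in_V: "(y, v) \<in> G \<Longrightarrow> v \<in> V \<Longrightarrow> (v, y) \<in> M"
  using EVF disj unfolding dgraph_def by auto

lemma G_M: "(v, f) \<in> M \<Longrightarrow> (f, v) \<in> G"
  unfolding dgraph_def by auto

lemma matched_f: "(v, f) \<in> M \<Longrightarrow> matched M {f} = {v}"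
  unfolding matched_def using MVF disj Muniq2 by blast

lemma matched_v: "(v, f) \<in> M \<Longrightarrow> matched M {v} = {f}"
  unfolding matched_def using MVF disj Muniq1 by blast

lemma matched_Un: "matched M X = (\<Union>x\<in>X. matched M {x})"
  unfolding matched_def by auto

lemma scc_self: "x \<in> W \<Longrightarrow> x \<in> scc W G x"
  unfolding scc_def by auto

lemma scc_eq: "u \<in> scc W G x \<Longrightarrow> scc W G u = scc W G x"
  unfolding scc_def by (auto intro: rtrancl_trans)

lemma scc_single_F:
  assumes "(v, f) \<in> M" "(v, f) \<notin> G\<^sup>*"
  shows "scc W G f = {f}"
proof -
  have "f \<in> W" using MVF assms by auto
  moreover have "u = f" if "u \<in> scc W G f" for u
  proof (rule ccontr)
    assume ne: "u \<noteq> f"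
    from that have fu: "(f, u) \<in> G\<^sup>*" and uf: "(u, f) \<in> G\<^sup>*" unfolding scc_def by auto
    from fu ne obtain y where fy: "(f, y) \<in> G" and yu: "(y, u) \<in> G\<^sup>*"
      by (metis converse_rtranclE)
    have "(y, f) \<in> M" using G_out_F[OF fy] MVF assms by auto
    hence "y = v" using assms Muniq2 by auto
    with yu uf assms show False by (meson rtrancl_trans)
  qed
  ultimately show ?thesis using scc_self by blast
qed

lemma scc_single_V:
  assumes "(v, f) \<in> M" "(v, f) \<notin> G\<^sup>*"
  shows "scc W G v = {v}"
proof -
  have "v \<in> W" using MVF assms by auto
  moreover have "u = v" if "u \<in> scc W G v" for u
  proof (rule ccontr)
    assume ne: "u \<noteq> v"
    from that have vu: "(v, u) \<in> G\<^sup>*" and uv: "(u, v) \<in> G\<^sup>*" unfolding scc_def by auto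
    from uv ne obtain y where uy: "(u, y) \<in> G\<^sup>*" and yv: "(y, v) \<in> G"
      by (metis rtranclE)
    have "(v, y) \<in> M" using G_in_V[OF yv] MVF assms by auto
    hence "y = f" using assms Muniq1 by auto
    with uy vu assms show False by (meson rtrancl_trans)
  qed
  ultimately show ?thesis using scc_self by blast
qed

lemma cl_mate: assumes "(v, f) \<in> M" shows "cl v = cl f"
proof (cases "(v, f) \<in> G\<^sup>*")
  case True
  have "v \<in> scc W G f" using True G_M[OF assms] MVF[OF assms] unfolding scc_def by auto
  then show ?thesis unfolding cl_def using scc_eq by metis
next
  case False
  show ?thesis unfolding cl_def scc_single_F[OF assms False] scc_single_V[OF assms False]
    matched_f[OF assms] matched_v[OF assms] by auto
qed

lemma cl_eq: assumes "u \<in> cl x" shows "cl u = cl x"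
proof -
  from assms consider "u \<in> scc W G x" | y where "y \<in> scc W G x" "u \<in> matched M {y}"
    unfolding cl_def using matched_Un by blast
  then show ?thesis
  proof cases
    case 1 then show ?thesis unfolding cl_def using scc_eq by metis
  next
    case 2
    from 2(2) have "(y, u) \<in> M \<or> (u, y) \<in> M" unfolding matched_def by auto
    hence "cl u = cl y" using cl_mate by metis
    moreover have "cl y = cl x" using 2(1) unfolding cl_def using scc_eq by metis
    ultimately show ?thesis by simp
  qed
qed

definition mt :: "'a \<Rightarrow> 'a" where "mt f = (THE v. (v, f) \<in> M)"

lemma mt: "f \<in> F \<Longrightarrow> (mt f, f) \<in> M"
  unfolding mt_def using Mf by (metis theI')

lemma mt_eq: "(v, f) \<in> M \<Longrightarrow> mt f = v"
  using mt MVF Muniq2 by blast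

lemma inj_mt: "inj_on mt F"
  by (rule inj_onI) (metis mt Muniq1)

lemma matched_F: "X \<subseteq> F \<Longrightarrow> matched M X = mt ` X"
  unfolding matched_def using MVF disj mt mt_eq by blast

lemma card_matched: "X \<subseteq> F \<Longrightarrow> card (matched M X) = card X"
  using matched_F inj_mt by (metis card_image inj_on_subset)

lemma matched_V: "X \<subseteq> V \<Longrightarrow> matched M X = {f. (\<exists>v\<in>X. (v, f) \<in> M)}"
  unfolding matched_def using MVF disj by blast

definition inv :: "'a set \<Rightarrow> 'a set \<Rightarrow> ('a \<times> 'a) set \<Rightarrow> bool" where
  "inv V' F' E' \<longleftrightarrow> V' \<subseteq> V \<and> F' \<subseteq> F \<and> E' = E \<inter> (V' \<times> F') \<and>
     (\<forall>v f. (v, f) \<in> M \<longrightarrow> (v \<in> V' \<longleftrightarrow> f \<in> F')) \<and>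
     (\<forall>x y. (x, y) \<in> G \<longrightarrow> x \<in> V' \<union> F' \<longrightarrow> y \<in> V' \<union> F')"

lemma inv_init: "inv V F E"
  unfolding inv_def using MVF G_W EVF by auto

lemma reach_closed:
  assumes "\<forall>x y. (x, y) \<in> G \<longrightarrow> x \<in> R \<longrightarrow> y \<in> R" "(x, y) \<in> G\<^sup>*" "x \<in> R"
  shows "y \<in> R"
  using assms(2,3) by (induction rule: rtrancl_induct) (use assms(1) in auto)

context
  fixes V' F' E'
  assumes I: "inv V' F' E'"
begin

lemma I1: "V' \<subseteq> V" "F' \<subseteq> F" "E' = E \<inter> (V' \<times> F')"
  using I unfolding inv_def by auto

lemma I2: "(v, f) \<in> M \<Longrightarrow> v \<in> V' \<longleftrightarrow> f \<in> F'"
  using I unfolding inv_def by auto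

lemma I3: "\<forall>x y. (x, y) \<in> G \<longrightarrow> x \<in> V' \<union> F' \<longrightarrow> y \<in> V' \<union> F'"
  using I unfolding inv_def by auto

lemma matched_sub_adj: "X \<subseteq> F' \<Longrightarrow> matched M X \<subseteq> adj E' X"
proof
  fix u assume X: "X \<subseteq> F'" and "u \<in> matched M X"
  then obtain f where f: "f \<in> X" "u = mt f" using matched_F I1 by auto
  have m: "(u, f) \<in> M" using f mt X I1 by auto
  then have "u \<in> V'" using I2 f X by auto
  then show "u \<in> adj E' X" using m ME f X I1 unfolding adj_def by auto
qed

lemma adj_sub: "adj E' X \<subseteq> V'"
  using I1 unfolding adj_def by auto

lemma sc_char: assumes "X \<subseteq> F'"
  shows "self_contained_set F' E' X \<longleftrightarrow> adj E' X \<subseteq> matched M X"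
proof
  assume sc: "self_contained_set F' E' X"
  have fin: "finite (adj E' X)" using adj_sub I1 finV finite_subset by metis
  have "card (matched M X) = card (adj E' X)"
    using sc card_matched assms I1 unfolding self_contained_set_def by auto
  then show "adj E' X \<subseteq> matched M X"
    using card_subset_eq[OF fin matched_sub_adj[OF assms]] by simp
next
  assume a: "adj E' X \<subseteq> matched M X"
  have eq: "adj E' X = matched M X" using a matched_sub_adj[OF assms] by auto
  have "card X'' \<le> card (adj E' X'')" if "X'' \<subseteq> X" for X''
  proof -
    have fin: "finite (adj E' X'')" using adj_sub I1 finV finite_subset by metis
    have "card X'' = card (matched M X'')" using card_matched that assms I1 by auto
    also have "\<dots> \<le> card (adj E' X'')"
      using card_mono[OF fin matched_sub_adj] that assms by auto
    finally show ?thesis .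
  qed
  then show "self_contained_set F' E' X"
    unfolding self_contained_set_def using eq card_matched assms I1 by auto
qed


context
  fixes S C
  assumes min: "minimal_self_contained F' E' S" and Cdef: "C = S \<union> adj E' S"
begin

lemma S_basic: "S \<subseteq> F'" "S \<noteq> {}" "adj E' S = matched M S"
proof -
  show SF: "S \<subseteq> F'" "S \<noteq> {}" using min unfolding minimal_self_contained_def self_contained_set_def by auto
  have "adj E' S \<subseteq> matched M S" using sc_char[OF SF(1)] min unfolding minimal_self_contained_def by auto
  then show "adj E' S = matched M S" using matched_sub_adj[OF SF(1)] by auto
qed

lemma C_sub: "C \<subseteq> V' \<union> F'" using Cdef S_basic adj_sub by auto

lemma C_F: "C \<inter> F = S"
proof -
  have "adj E' S \<subseteq> V" using adj_sub I1 by blast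
  then show ?thesis using Cdef S_basic(1) I1 disj by blast
qed

lemma MC: "(v, f) \<in> M \<Longrightarrow> v \<in> C \<longleftrightarrow> f \<in> C"
proof -
  assume m: "(v, f) \<in> M"
  have SF: "S \<subseteq> F" using S_basic I1 by auto
  show ?thesis
  proof
    assume "v \<in> C"
    moreover have "v \<notin> S" using m MVF SF disj by auto
    ultimately have "v \<in> mt ` S" using Cdef S_basic matched_F[OF SF] by auto
    then obtain g where "g \<in> S" "v = mt g" by auto
    then have "(v, g) \<in> M" using mt SF by auto
    then show "f \<in> C" using m Muniq1 \<open>g \<in> S\<close> Cdef by auto
  next
    assume "f \<in> C"
    then have "f \<in> S" using C_F MVF[OF m] by auto
    then show "v \<in> C" using Cdef S_basic matched_F[OF SF] mt_eq[OF m] by auto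
  qed
qed

lemma matched_C: "matched M C \<subseteq> C"
  unfolding matched_def using MC by blast

lemma closed': "\<forall>x y. (x, y) \<in> G \<longrightarrow> x \<in> (V' \<union> F') - C \<longrightarrow> y \<in> (V' \<union> F') - C"
proof (intro allI impI)
  fix x y assume xy: "(x, y) \<in> G" and x: "x \<in> (V' \<union> F') - C"
  have y: "y \<in> V' \<union> F'" using I3 xy x by auto
  show "y \<in> (V' \<union> F') - C"
  proof (rule ccontr)
    assume "y \<notin> (V' \<union> F') - C"
    with y have yC: "y \<in> C" by auto
    show False
    proof (cases "y \<in> F")
      case True
      then have yS: "y \<in> S" using C_F yC by auto
      show False
      proof (cases "(x, y) \<in> M")
        case True
        then show ?thesis using MC[OF True] yC x by blast
      next
        case False
        then have "(x, y) \<in> E" using xy True MVF disj unfolding dgraph_def by blast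
        then have "x \<in> V" using EVF by auto
        then have "x \<in> V'" using x I1 disj by auto
        then have "x \<in> adj E' S" using \<open>(x, y) \<in> E\<close> yS S_basic I1 unfolding adj_def by auto
        then show False using x Cdef by auto
      qed
    next
      case False
      then have "y \<in> V" using y I1 by auto
      then have yx: "(y, x) \<in> M" using G_in_V xy by auto
      then show False using MC[OF yx] yC x by blast
    qed
  qed
qed

lemma allreach: assumes h: "h \<in> S" and g: "g \<in> S" shows "(g, h) \<in> G\<^sup>*"
proof -
  define Sh where "Sh = {g \<in> F'. (g, h) \<in> G\<^sup>*}"
  have hF: "h \<in> F'" using h S_basic by auto
  have ShS: "Sh \<subseteq> S"
  proof
    fix g assume "g \<in> Sh"
    then have "g \<in> F' \<and> (g, h) \<in> G\<^sup>*" unfolding Sh_def by blast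
    then have gF: "g \<in> F'" and gh: "(g, h) \<in> G\<^sup>*" by blast+
    have "g \<in> C"
    proof (rule ccontr)
      assume "g \<notin> C"
      then have "g \<in> (V' \<union> F') - C" using gF by blast
      then have "h \<in> (V' \<union> F') - C" using reach_closed[OF closed' gh] by blast
      then show False using h Cdef by blast
    qed
    then show "g \<in> S" using C_F gF I1 by blast
  qed
  have ShF: "Sh \<subseteq> F'" unfolding Sh_def by auto
  have "adj E' Sh \<subseteq> matched M Sh"
  proof
    fix v assume "v \<in> adj E' Sh"
    then obtain g where g: "g \<in> Sh" "(v, g) \<in> E'" unfolding adj_def by auto
    have vV: "v \<in> V'" using g I1 by auto
    have gF: "g \<in> F" using g I1 by auto
    show "v \<in> matched M Sh"
    proof (cases "(v, g) \<in> M")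
      case True
      then show ?thesis using g unfolding matched_def by auto
    next
      case False
      then have vg: "(v, g) \<in> G" using g I1 unfolding dgraph_def by auto
      have "v \<in> V" using vV I1 by blast
      then obtain f' where f': "(v, f') \<in> M" using Mv by blast
      have f'F: "f' \<in> F'" using I2[OF f'] vV by auto
      have "(g, h) \<in> G\<^sup>*" using g(1) unfolding Sh_def by blast
      then have "(v, h) \<in> G\<^sup>*" using vg by (rule converse_rtrancl_into_rtrancl[rotated])
      then have "(f', h) \<in> G\<^sup>*" using G_M[OF f'] by (rule converse_rtrancl_into_rtrancl[rotated])
      then have "f' \<in> Sh" using f'F unfolding Sh_def by blast
      then show ?thesis using f' unfolding matched_def by auto
    qed
  qed
  then have scS: "self_contained_set F' E' Sh" using sc_char[OF ShF] by auto
  have neS: "Sh \<noteq> {}" using hF unfolding Sh_def by auto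
  have nm: "\<And>S'. S' \<noteq> {} \<Longrightarrow> S' \<subset> S \<Longrightarrow> self_contained_set F' E' S' \<Longrightarrow> False"
    using min unfolding minimal_self_contained_def by blast
  have "Sh = S"
  proof (rule ccontr)
    assume "Sh \<noteq> S"
    then have "Sh \<subset> S" using ShS by (rule psubsetI[rotated])
    then show False using nm neS scS by metis
  qed
  then have "g \<in> Sh" using g by simp
  then show ?thesis unfolding Sh_def by blast
qed

lemma cl_S: assumes h: "h \<in> S" shows "cl h = C"
proof
  have SW: "S \<subseteq> W" using S_basic I1 by auto
  have "S \<subseteq> scc W G h" unfolding scc_def using allreach h SW by auto
  moreover have "matched M S \<subseteq> matched M (scc W G h)" using calculation unfolding matched_def by auto
  ultimately show "C \<subseteq> cl h" unfolding cl_def Cdef using S_basic by auto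
next
  have hR: "h \<in> V' \<union> F'" using h S_basic by auto
  have sccC: "scc W G h \<subseteq> C"
  proof
    fix u assume "u \<in> scc W G h"
    then have hu: "(h, u) \<in> G\<^sup>*" and uh: "(u, h) \<in> G\<^sup>*" unfolding scc_def by auto
    have uR: "u \<in> V' \<union> F'" using reach_closed[OF I3 hu hR] .
    show "u \<in> C"
    proof (rule ccontr)
      assume "u \<notin> C"
      then have "h \<in> (V' \<union> F') - C" using reach_closed[OF closed' uh] uR by auto
      then show False using h Cdef by auto
    qed
  qed
  moreover have "matched M (scc W G h) \<subseteq> C"
    using matched_C calculation unfolding matched_def by blast
  ultimately show "cl h \<subseteq> C" unfolding cl_def by auto
qed

lemma cl_C: "x \<in> C \<Longrightarrow> cl x = C"
  using cl_S cl_eq S_basic by blast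

lemma edges_C: "{(v, C) | v. v \<in> adj E S - adj E' S} =
   {(x, cl w) | x w. x \<in> W \<and> w \<in> W \<and> (x, w) \<in> G \<and> x \<notin> cl w \<and> w \<in> C}"
proof (intro equalityI subsetI)
  fix p assume "p \<in> {(v, C) | v. v \<in> adj E S - adj E' S}"
  then obtain v where p: "p = (v, C)" and v1: "v \<in> adj E S" and v2: "v \<notin> adj E' S" by auto
  from v1 obtain g where g: "g \<in> S" "(v, g) \<in> E" unfolding adj_def by auto
  have gF: "g \<in> F'" using g S_basic by auto
  have vV: "v \<in> V" using g EVF by auto
  have "v \<notin> V'" using v2 g gF I1 unfolding adj_def by auto
  have "(v, g) \<notin> M"
  proof
    assume "(v, g) \<in> M"
    then have "v \<in> V'" using I2 gF by auto
    then show False using \<open>v \<notin> V'\<close> by auto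
  qed
  then have vg: "(v, g) \<in> G" using g unfolding dgraph_def by auto
  have "v \<notin> C" using \<open>v \<notin> V'\<close> vV C_sub I1 disj by auto
  then show "p \<in> {(x, cl w) | x w. x \<in> W \<and> w \<in> W \<and> (x, w) \<in> G \<and> x \<notin> cl w \<and> w \<in> C}"
    using p vg G_W cl_S[OF g(1)] g(1) Cdef by auto
next
  fix p assume "p \<in> {(x, cl w) | x w. x \<in> W \<and> w \<in> W \<and> (x, w) \<in> G \<and> x \<notin> cl w \<and> w \<in> C}"
  then obtain x w where p: "p = (x, cl w)" and xw: "(x, w) \<in> G" and x: "x \<notin> cl w" and w: "w \<in> C" by auto
  have clw: "cl w = C" using cl_C w .
  show "p \<in> {(v, C) | v. v \<in> adj E S - adj E' S}"
  proof (cases "w \<in> F")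
    case False
    then have "w \<in> V" using w C_sub I1 by auto
    then have wx: "(w, x) \<in> M" using G_in_V xw by auto
    then have "x \<in> C" using MC[OF wx] w by blast
    then show ?thesis using x clw by auto
  next
    case True
    then have wS: "w \<in> S" using C_F w by auto
    have "(x, w) \<in> E" using xw True MVF disj unfolding dgraph_def by auto
    then have "x \<in> adj E S" using wS unfolding adj_def by auto
    moreover have "x \<notin> adj E' S" using x clw Cdef by auto
    ultimately show ?thesis using p clw by auto
  qed
qed

lemma inv_step: "inv (V' - C) (F' - C) (E' \<inter> ((V' - C) \<times> (F' - C)))"
proof -
  have "(V' - C) \<union> (F' - C) = (V' \<union> F') - C" by auto
  then show ?thesis unfolding inv_def using I1 I2 MC closed' by auto
qed

end

end


definition Ed :: "'a set \<Rightarrow> ('a \<times> 'a set) set" where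
  "Ed D = {(x, cl w) | x w. x \<in> W \<and> w \<in> W \<and> (x, w) \<in> G \<and> x \<notin> cl w \<and> w \<in> D}"

lemma Ed_Un: "Ed (A \<union> B) = Ed A \<union> Ed B"
  unfolding Ed_def by blast

lemma merge_eq: "merge M (clust W G) = (cl ` W, Ed W)"
proof -
  have 1: "(\<lambda>S. S \<union> matched M S) ` scc W G ` W = cl ` W"
    unfolding cl_def by (simp add: image_image)
  have 2: "{(x, S \<union> matched M S) | x S. (x, S) \<in> {(x, scc W G w) | x w. x \<in> W \<and> w \<in> W \<and> (x, w) \<in> G \<and> x \<notin> scc W G w}
       \<and> x \<notin> matched M S} = Ed W"
    unfolding Ed_def cl_def by blast
  show ?thesis unfolding merge_def clust_def using 1 2 by simp
qed

lemma run_correct: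
  "alg1 E V' F' E' Vs Es res \<Longrightarrow> inv V' F' E' \<Longrightarrow> Vs = cl ` (W - (V' \<union> F')) \<Longrightarrow>
   Es = Ed (W - (V' \<union> F')) \<Longrightarrow> res = (cl ` W, Ed W)"
proof (induction rule: alg1.induct)
  case (stop V' F' E' Vs Es)
  then show ?case by simp
next
  case (step V' F' E' S C Vs Es res)
  have Csub: "C \<subseteq> V' \<union> F'" using C_sub[OF step.prems(1) step.hyps(2,3)] .
  have R: "V' \<union> F' \<subseteq> W" using step.prems(1) unfolding inv_def by blast
  have D: "W - ((V' - C) \<union> (F' - C)) = (W - (V' \<union> F')) \<union> C" using Csub R by blast
  have Cne: "C \<noteq> {}" using S_basic(2)[OF step.prems(1) step.hyps(2,3)] step.hyps(3) by blast
  have clC: "cl ` C = {C}" using cl_C[OF step.prems(1) step.hyps(2,3)] Cne by blast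
  have "insert C Vs = cl ` (W - ((V' - C) \<union> (F' - C)))"
    unfolding D image_Un clC step.prems(2) by blast
  moreover have "Es \<union> {(v, C) | v. v \<in> adj E S - adj E' S} = Ed (W - ((V' - C) \<union> (F' - C)))"
    unfolding D Ed_Un step.prems(3) edges_C[OF step.prems(1) step.hyps(2,3)]
    unfolding Ed_def by blast
  moreover have "inv (V' - C) (F' - C) (E' \<inter> ((V' - C) \<times> (F' - C)))"
    using inv_step[OF step.prems(1) step.hyps(2,3)] .
  ultimately show ?case using step.IH by blast
qed

lemma run_exists:
  "inv V' F' E' \<Longrightarrow> \<exists>res. alg1 E V' F' E' Vs Es res"
proof (induction "card (V' \<union> F')" arbitrary: V' F' E' Vs Es rule: less_induct)
  case less
  note I = less.prems
  show ?case
  proof (cases "V' \<union> F' = {}")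
    case True
    then show ?thesis using alg1.stop[of V' F'] by blast
  next
    case False
    have finR: "finite (V' \<union> F')"
      using finite_subset[OF I1(1)[OF I] finV] finite_subset[OF I1(2)[OF I] finF] by simp
    have "F' \<noteq> {}"
    proof -
      from False obtain x where "x \<in> V' \<union> F'" by blast
      then show ?thesis
      proof
        assume x: "x \<in> V'"
        then have "x \<in> V" using I1[OF I] by blast
        then obtain f where f: "(x, f) \<in> M" using Mv by blast
        then show ?thesis using I2[OF I f] x by blast
      qed blast
    qed
    define P where "P = (\<lambda>X. X \<noteq> {} \<and> self_contained_set F' E' X)"
    have "adj E' F' \<subseteq> matched M F'"
    proof
      fix v assume "v \<in> adj E' F'"
      then have v: "v \<in> V'" using adj_sub[OF I] by blast
      then have "v \<in> V" using I1[OF I] by blast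
      then obtain f where f: "(v, f) \<in> M" using Mv by blast
      then have "f \<in> F'" using I2[OF I f] v by blast
      then show "v \<in> matched M F'" using f unfolding matched_def by blast
    qed
    then have "P F'" unfolding P_def using sc_char[OF I] \<open>F' \<noteq> {}\<close> by blast
    then obtain S where PS: "P S" and Smin: "\<forall>X. P X \<longrightarrow> card S \<le> card X"
      using ex_has_least_nat[of P F' card] by blast
    have SF: "S \<subseteq> F'" using PS unfolding P_def self_contained_set_def by blast
    have finS: "finite S" using finite_subset[OF SF] finR by simp
    have n1: "S \<noteq> {}" and n2: "self_contained_set F' E' S" using PS unfolding P_def by blast+
    have n3: "\<not> (\<exists>S'. S' \<noteq> {} \<and> S' \<subset> S \<and> self_contained_set F' E' S')"
    proof
      assume "\<exists>S'. S' \<noteq> {} \<and> S' \<subset> S \<and> self_contained_set F' E' S'"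
      then obtain S' where "P S'" "S' \<subset> S" unfolding P_def by blast
      then show False using Smin psubset_card_mono[OF finS] by (meson leD)
    qed
    have min: "minimal_self_contained F' E' S"
      unfolding minimal_self_contained_def using n1 n2 n3 by blast
    define C where "C = S \<union> adj E' S"
    have Csub: "C \<subseteq> V' \<union> F'" using C_sub[OF I min C_def] .
    have Cne: "C \<noteq> {}" using n1 unfolding C_def by simp
    have lt: "card ((V' - C) \<union> (F' - C)) < card (V' \<union> F')"
    proof -
      have "(V' - C) \<union> (F' - C) \<subset> V' \<union> F'" using Csub Cne by blast
      then show ?thesis by (rule psubset_card_mono[OF finR])
    qed
    obtain res where "alg1 E (V' - C) (F' - C) (E' \<inter> ((V' - C) \<times> (F' - C))) (insert C Vs)
      (Es \<union> {(v, C) | v. v \<in> adj E S - adj E' S}) res"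
      using less.hyps[OF lt inv_step[OF I min C_def], of "insert C Vs" "Es \<union> {(v, C) | v. v \<in> adj E S - adj E' S}"] by (elim exE)
    then have "alg1 E V' F' E' Vs Es res" by (rule alg1.step[OF False min C_def])
    then show ?thesis by (rule exI)
  qed
qed

end

theorem lemma41:
  fixes V F :: "'a set" and E M :: "('a \<times> 'a) set"
  assumes "finite V" and "finite F" and "bipartite V F E"
    and "self_contained_graph V F E"
    and "perfect_matching V F E M"
  shows "(\<exists>res. alg1 E V F E {} {} res) \<and>
         (\<forall>res. alg1 E V F E {} {} res \<longrightarrow> res = merge M (clust (V \<union> F) (dgraph E M)))"
proof -
  have "L V F E M"
    unfolding L_def using assms unfolding bipartite_def perfect_matching_def by blast
  then interpret L V F E M .
  show ?thesis
  proof
    show "\<exists>res. alg1 E V F E {} {} res" using run_exists[OF inv_init] .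
    show "\<forall>res. alg1 E V F E {} {} res \<longrightarrow> res = merge M (clust (V \<union> F) (dgraph E M))"
    proof (intro allI impI)
      fix res assume r: "alg1 E V F E {} {} res"
      have "res = (cl ` W, Ed W)"
        by (rule run_correct[OF r inv_init]) (simp_all add: Ed_def)
      then show "res = merge M (clust (V \<union> F) (dgraph E M))" using merge_eq by simp
    qed
  qed
qed

end
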